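(* Let $k=\mathbb R$ or $\mathbb C$, let $(E,g)$ be a finite-dimensional inner product vector space over $k$, let $f\in\operatorname{End}_k(E)$, let $H_1,\dots,H_n$ be $f$-invariant subspaces with $E=H_1\oplus\dots\oplus H_n$, and write $f_i=f|_{H_i}$. Let $\mathcal H_f^\perp=[\operatorname{Im} f_1]_1^\perp\oplus\dots\oplus[\operatorname{Im} f_n]_n^\perp$. Then $\mathcal H_f^\perp=[\operatorname{Im} f]^\perp$ if and only if $[\operatorname{Im} f_i]_i^\perp\subseteq\big[\sum_{j\ne i}\operatorname{Im} f_j\big]^\perp$ for every $i\in\{1,\dots,n\}$.
   Context: An inner product is linear in the first argument, conjugate-symmetric and positive definite. For a subspace $U\subseteq E$, $U^\perp=\{e\in E:g(u,e)=0\ \forall u\in U\}$; for a subspace $W\subseteq H_i$, $[W]_i^\perp=\{v\in H_i:g(w,v)=0\ \forall w\in W\}$. *)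

theory Defs
  imports Complex_Main "HOL-Library.FuncSet"
begin

text \<open>The scalar field k is R or C: we carry an injective ring embedding iota of k into the
complex numbers whose range is either the reals or all of C.  Conjugation on k is
transported along iota.\<close>

definition R_or_C :: "('k::field \<Rightarrow> complex) \<Rightarrow> bool" where
  "R_or_C \<iota> \<longleftrightarrow> inj \<iota> \<and> \<iota> 0 = 0 \<and> \<iota> 1 = 1
     \<and> (\<forall>a b. \<iota> (a + b) = \<iota> a + \<iota> b) \<and> (\<forall>a b. \<iota> (a * b) = \<iota> a * \<iota> b)
     \<and> (range \<iota> = \<real> \<or> range \<iota> = UNIV)"

definition is_inner_product ::
  "('k::field \<Rightarrow> complex) \<Rightarrow> ('k \<Rightarrow> 'v::ab_group_add \<Rightarrow> 'v) \<Rightarrow> ('v \<Rightarrow> 'v \<Rightarrow> 'k) \<Rightarrow> bool" where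
  "is_inner_product \<iota> scale g \<longleftrightarrow>
     (\<forall>a u v w. g (scale a u + v) w = a * g u w + g v w)
     \<and> (\<forall>u v. \<iota> (g u v) = cnj (\<iota> (g v u)))
     \<and> (\<forall>v. v \<noteq> 0 \<longrightarrow> \<iota> (g v v) \<in> \<real> \<and> Re (\<iota> (g v v)) > 0)"

definition orth :: "('v \<Rightarrow> 'v \<Rightarrow> 'k::zero) \<Rightarrow> 'v set \<Rightarrow> 'v set" where
  "orth g U = {e. \<forall>u\<in>U. g u e = 0}"

definition orth_in :: "('v \<Rightarrow> 'v \<Rightarrow> 'k::zero) \<Rightarrow> 'v set \<Rightarrow> 'v set \<Rightarrow> 'v set" where
  "orth_in g H W = {v\<in>H. \<forall>w\<in>W. g w v = 0}"

definition sumset :: "'i set \<Rightarrow> ('i \<Rightarrow> 'v::comm_monoid_add set) \<Rightarrow> 'v set" where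
  "sumset I A = {sum h I | h. h \<in> (\<Pi>\<^sub>E i\<in>I. A i)}"

definition internal_direct_sum ::
  "('k::field \<Rightarrow> 'v::ab_group_add \<Rightarrow> 'v) \<Rightarrow> 'i set \<Rightarrow> ('i \<Rightarrow> 'v set) \<Rightarrow> bool" where
  "internal_direct_sum scale I H \<longleftrightarrow>
     (\<forall>i\<in>I. module.subspace scale (H i))
     \<and> (\<forall>x. \<exists>!h. h \<in> (\<Pi>\<^sub>E i\<in>I. H i) \<and> x = sum h I)"

end

theory Submission
  imports Defs
begin

locale ipctx = vector_space scale for scale :: "'k::field \<Rightarrow> 'v::ab_group_add \<Rightarrow> 'v" +
  fixes \<iota> :: "'k \<Rightarrow> complex" and g :: "'v \<Rightarrow> 'v \<Rightarrow> 'k"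
  assumes kk: "R_or_C \<iota>" and ipp: "is_inner_product \<iota> scale g"
begin

lemma iota_inj: "\<iota> a = \<iota> b \<Longrightarrow> a = b"
  using kk unfolding R_or_C_def by (meson injD)
lemma iota_0: "\<iota> 0 = 0" using kk unfolding R_or_C_def by blast
lemma iota_add: "\<iota> (a + b) = \<iota> a + \<iota> b" using kk unfolding R_or_C_def by blast

lemma g_lin: "g (scale a u + v) w = a * g u w + g v w"
  using ipp unfolding is_inner_product_def by blast
lemma g_cnj: "\<iota> (g u v) = cnj (\<iota> (g v u))"
  using ipp unfolding is_inner_product_def by blast
lemma g_pos: "v \<noteq> 0 \<Longrightarrow> Re (\<iota> (g v v)) > 0"
  using ipp unfolding is_inner_product_def by blast

lemma g_add_left: "g (u + v) w = g u w + g v w"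
  using g_lin[of 1 u v w] by simp
lemma g_zero_left[simp]: "g 0 w = 0"
proof -
  have "g 0 w + g 0 w = g 0 w + 0" using g_add_left[of 0 0 w] by simp
  then show ?thesis by (rule add_left_imp_eq)
qed
lemma g_scale_left: "g (scale a u) w = a * g u w"
proof -
  have "g (scale a u + 0) w = a * g u w + g 0 w" by (rule g_lin)
  then show ?thesis by (simp only: add_0_right g_zero_left)
qed
lemma g_diff_left: "g (u - v) w = g u w - g v w"
proof -
  have "g u w = g (u - v) w + g v w" using g_add_left[of "u - v" v w] by simp
  then show ?thesis by (simp add: eq_diff_eq)
qed
lemma g_sym0: "g u v = 0 \<longleftrightarrow> g v u = 0"
proof -
  have *: "g v u = 0" if "g u v = 0" for u v
  proof -
    have "\<iota> (g v u) = \<iota> 0" using g_cnj[of v u] that by (simp add: iota_0)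
    then show ?thesis by (rule iota_inj)
  qed
  show ?thesis using *[of u v] *[of v u] by blast
qed
lemma g_add_right: "g u (v + w) = g u v + g u w"
proof -
  have "\<iota> (g u (v + w)) = \<iota> (g u v + g u w)"
    by (simp add: g_cnj[of u] g_add_left iota_add)
  then show ?thesis by (rule iota_inj)
qed
lemma g_zero_right[simp]: "g u 0 = 0"
proof -
  have "g u 0 + g u 0 = g u 0 + 0" using g_add_right[of u 0 0] by simp
  then show ?thesis by (rule add_left_imp_eq)
qed
lemma g_diff_right: "g u (v - w) = g u v - g u w"
proof -
  have "g u v = g u (v - w) + g u w" using g_add_right[of u "v - w" w] by simp
  then show ?thesis by (simp add: eq_diff_eq)
qed
lemma g_sum_right: "g u (sum x A) = (\<Sum>i\<in>A. g u (x i))"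
  by (induction A rule: infinite_finite_induct) (auto simp: g_add_right)
lemma g_self: "g v v = 0 \<Longrightarrow> v = 0"
  using g_pos[of v] iota_0 by force

lemma orth_span:
  assumes "\<forall>w\<in>B. g w b = 0" shows "\<forall>w\<in>span B. g w b = 0"
proof -
  have "subspace {w. g w b = 0}"
    by (rule subspaceI) (auto simp: g_add_left g_scale_left)
  then have "span B \<subseteq> {w. g w b = 0}" using assms by (intro span_minimal) auto
  then show ?thesis by auto
qed

lemma proj:
  assumes "finite B"
  shows "\<exists>a b. a \<in> span B \<and> v = a + b \<and> (\<forall>w\<in>span B. g w b = 0)"
  using assms
proof (induction B arbitrary: v rule: finite_induct)
  case empty
  then show ?case by (intro exI[of _ 0] exI[of _ v]) auto
next
  case (insert x B)
  obtain a b where ab: "a \<in> span B" "v = a + b" "\<forall>w\<in>span B. g w b = 0"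
    using insert.IH by blast
  obtain a' b' where ab': "a' \<in> span B" "x = a' + b'" "\<forall>w\<in>span B. g w b' = 0"
    using insert.IH by blast
  have spB: "span B \<subseteq> span (insert x B)" by (rule span_mono) auto
  show ?case
  proof (cases "b' = 0")
    case True
    then have "x \<in> span B" using ab' by simp
    then have "span (insert x B) \<subseteq> span B"
      by (intro span_minimal) (auto intro: span_base)
    then have "span (insert x B) = span B" using spB by blast
    then show ?thesis using ab by auto
  next
    case False
    define c where "c = g b b' / g b' b'"
    have nz: "g b' b' \<noteq> 0" using False g_self by blast
    define b'' where "b'' = b - scale c b'"
    define a'' where "a'' = a + scale c b'"
    have "b' = x - a'" using ab' by simp
    moreover have "x \<in> span (insert x B)" by (rule span_base) simp
    moreover have "a' \<in> span (insert x B)" using ab' spB by blast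
    ultimately have b'sp: "b' \<in> span (insert x B)" using span_diff by simp
    have "a \<in> span (insert x B)" using ab spB by blast
    then have a''sp: "a'' \<in> span (insert x B)"
      unfolding a''_def using b'sp by (intro span_add span_scale)
    have v: "v = a'' + b''" unfolding a''_def b''_def using ab by simp
    have oB: "\<forall>w\<in>span B. g w b'' = 0"
    proof
      fix w assume "w \<in> span B"
      then have "g w b = 0" "g w b' = 0" using ab ab' by blast+
      then have "g b w = 0" "g b' w = 0" using g_sym0 by simp_all
      then have "g b'' w = 0" unfolding b''_def by (simp add: g_diff_left g_scale_left)
      then show "g w b'' = 0" using g_sym0 by simp
    qed
    have "g b'' b' = 0" unfolding b''_def c_def using nz by (simp add: g_diff_left g_scale_left)
    moreover have "g a' b'' = 0" using oB ab' by blast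
    then have "g b'' a' = 0" using g_sym0 by simp
    ultimately have "g b'' x = 0" using ab' by (simp add: g_add_right)
    then have "g x b'' = 0" using g_sym0 by simp
    moreover have "\<forall>w\<in>B. g w b'' = 0" using oB span_base by blast
    ultimately have "\<forall>w\<in>insert x B. g w b'' = 0" by simp
    then have "\<forall>w\<in>span (insert x B). g w b'' = 0" by (rule orth_span)
    then show ?thesis using v a''sp by blast
  qed
qed


lemma orth_sum:
  assumes "\<forall>i\<in>A. x i \<in> orth g U" shows "sum x A \<in> orth g U"
  using assms unfolding orth_def by (simp add: g_sum_right)

end

theorem lemma3p7:
  fixes \<iota> :: "'k::field \<Rightarrow> complex"
    and scale :: "'k \<Rightarrow> 'v::ab_group_add \<Rightarrow> 'v"
    and g :: "'v \<Rightarrow> 'v \<Rightarrow> 'k"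
    and f :: "'v \<Rightarrow> 'v"
    and n :: nat
    and H :: "nat \<Rightarrow> 'v set"
  assumes k: "R_or_C \<iota>"
    and vs: "vector_space scale"
    and fin: "\<exists>B. finite B \<and> module.span scale B = UNIV"
    and ip: "is_inner_product \<iota> scale g"
    and lin: "Vector_Spaces.linear scale scale f"
    and inv: "\<forall>i\<in>{1..n}. f ` H i \<subseteq> H i"
    and dsum: "internal_direct_sum scale {1..n} H"
  shows "sumset {1..n} (\<lambda>i. orth_in g (H i) (f ` H i)) = orth g (range f)
     \<longleftrightarrow> (\<forall>i\<in>{1..n}. orth_in g (H i) (f ` H i)
              \<subseteq> orth g (sumset ({1..n} - {i}) (\<lambda>j. f ` H j)))"
proof -
  interpret ipctx scale \<iota> g
    by (rule ipctx.intro[OF vs]) (simp add: ipctx_axioms_def k ip)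
  interpret L: Vector_Spaces.linear scale scale f by (rule lin)
  define I where "I = {1..n::nat}"
  define K where "K i = orth_in g (H i) (f ` H i)" for i
  have finI: "finite I" unfolding I_def by simp
  have Hsub: "\<forall>i\<in>I. subspace (H i)" using dsum unfolding internal_direct_sum_def I_def by blast
  have dec: "\<exists>h. h \<in> (\<Pi>\<^sub>E i\<in>I. H i) \<and> x = sum h I" for x
    using dsum unfolding internal_direct_sum_def I_def by blast
  have rng: "subspace (range f)" by (rule L.subspace_image) simp
  have Kzero: "0 \<in> K i" if "i \<in> I" for i
    unfolding K_def orth_in_def using Hsub that subspace_0 by auto
  have KH: "K i \<subseteq> H i" for i unfolding K_def orth_in_def by auto
  have Korth0: "g w v = 0" if "v \<in> K i" "w \<in> f ` H i" for v w i
    using that unfolding K_def orth_in_def by auto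
  have sumset_rng: "sumset (I - {i}) (\<lambda>j. f ` H j) \<subseteq> range f" for i
  proof
    fix u assume "u \<in> sumset (I - {i}) (\<lambda>j. f ` H j)"
    then obtain h' where h': "h' \<in> (\<Pi>\<^sub>E j\<in>I - {i}. f ` H j)" "u = sum h' (I - {i})"
      unfolding sumset_def by blast
    show "u \<in> range f" unfolding h'(2)
      by (rule subspace_sum[OF rng]) (use h'(1) in auto)
  qed
  have Korth: "v \<in> orth g (range f)"
    if R: "\<forall>i\<in>I. K i \<subseteq> orth g (sumset (I - {i}) (\<lambda>j. f ` H j))" and i: "i \<in> I" and v: "v \<in> K i"
    for v i
    unfolding orth_def
  proof (intro CollectI ballI)
    fix y assume "y \<in> range f"
    then obtain x where y: "y = f x" by blast
    obtain h where h: "h \<in> (\<Pi>\<^sub>E i\<in>I. H i)" "x = sum h I" using dec by blast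
    have "y = (\<Sum>j\<in>I. f (h j))" unfolding y h(2) by (rule L.sum)
    also have "\<dots> = f (h i) + (\<Sum>j\<in>I - {i}. f (h j))" using finI i by (rule sum.remove)
    finally have y2: "y = f (h i) + (\<Sum>j\<in>I - {i}. f (h j))" .
    have "g (f (h i)) v = 0" using Korth0[OF v] h(1) i by auto
    moreover have "(\<Sum>j\<in>I - {i}. f (h j)) \<in> sumset (I - {i}) (\<lambda>j. f ` H j)"
      unfolding sumset_def
    proof (intro CollectI exI conjI)
      show "(\<Sum>j\<in>I - {i}. f (h j)) = sum (restrict (\<lambda>j. f (h j)) (I - {i})) (I - {i})"
        by (rule sum.cong) auto
      show "restrict (\<lambda>j. f (h j)) (I - {i}) \<in> (\<Pi>\<^sub>E j\<in>I - {i}. f ` H j)"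
        using h(1) by auto
    qed
    then have "g (\<Sum>j\<in>I - {i}. f (h j)) v = 0" using R i v unfolding orth_def by blast
    ultimately show "g y v = 0" unfolding y2 by (simp add: g_add_left)
  qed
  have "sumset I K = orth g (range f) \<longleftrightarrow>
        (\<forall>i\<in>I. K i \<subseteq> orth g (sumset (I - {i}) (\<lambda>j. f ` H j)))"
  proof
    assume eq: "sumset I K = orth g (range f)"
    show "\<forall>i\<in>I. K i \<subseteq> orth g (sumset (I - {i}) (\<lambda>j. f ` H j))"
    proof (intro ballI subsetI)
      fix i v assume i: "i \<in> I" and v: "v \<in> K i"
      have "v \<in> sumset I K"
        unfolding sumset_def
      proof (intro CollectI exI conjI)
        show "v = sum (restrict (\<lambda>j. if j = i then v else 0) I) I"
        proof -
          have "sum (restrict (\<lambda>j. if j = i then v else 0) I) I = sum (\<lambda>j. if j = i then v else 0) I"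
            by (rule sum.cong) auto
          also have "\<dots> = v" using i finI by (simp add: sum.delta)
          finally show ?thesis by simp
        qed
        show "restrict (\<lambda>j. if j = i then v else 0) I \<in> (\<Pi>\<^sub>E j\<in>I. K j)"
          using v Kzero by auto
      qed
      then have vo: "v \<in> orth g (range f)" using eq by simp
      show "v \<in> orth g (sumset (I - {i}) (\<lambda>j. f ` H j))"
        using vo sumset_rng[of i] unfolding orth_def by blast
    qed
  next
    assume R: "\<forall>i\<in>I. K i \<subseteq> orth g (sumset (I - {i}) (\<lambda>j. f ` H j))"
    show "sumset I K = orth g (range f)"
    proof
      show "sumset I K \<subseteq> orth g (range f)"
      proof
        fix e assume "e \<in> sumset I K"
        then obtain h where h: "h \<in> (\<Pi>\<^sub>E i\<in>I. K i)" "e = sum h I" unfolding sumset_def by blast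
        show "e \<in> orth g (range f)" unfolding h(2)
          by (rule orth_sum) (use h(1) Korth[OF R] in auto)
      qed
    next
      show "orth g (range f) \<subseteq> sumset I K"
      proof
        fix e assume e: "e \<in> orth g (range f)"
        obtain h where h: "h \<in> (\<Pi>\<^sub>E i\<in>I. H i)" "e = sum h I" using dec by blast
        obtain B0 where B0: "finite B0" "span B0 = UNIV" using fin by blast
        have "\<forall>i\<in>I. \<exists>p. fst p \<in> f ` H i \<and> snd p \<in> K i \<and> h i = fst p + snd p"
        proof
          fix i assume i: "i \<in> I"
          obtain B where B: "B \<subseteq> f ` H i" "independent B" "f ` H i \<subseteq> span B"
            using maximal_independent_subset by blast
          have finB: "finite B" using independent_span_bound[OF B0(1) B(2)] B0(2) by blast
          have sf: "subspace (f ` H i)" using Hsub i by (intro L.subspace_image) auto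
          have spB: "span B \<subseteq> f ` H i" using B(1) sf by (rule span_minimal)
          obtain a b where ab: "a \<in> span B" "h i = a + b" "\<forall>w\<in>span B. g w b = 0"
            using proj[OF finB] by blast
          have a: "a \<in> f ` H i" using ab(1) spB by blast
          have "h i \<in> H i" using h(1) i by auto
          moreover have "a \<in> H i" using a inv i unfolding I_def by blast
          ultimately have "h i - a \<in> H i" using Hsub i subspace_diff by blast
          then have bH: "b \<in> H i" using ab(2) by (metis add_diff_cancel_left')
          have "b \<in> K i" unfolding K_def orth_in_def using bH ab(3) B(3) by blast
          then show "\<exists>p. fst p \<in> f ` H i \<and> snd p \<in> K i \<and> h i = fst p + snd p"
            using a ab(2) by (intro exI[of _ "(a, b)"]) simp
        qed
        then obtain p where p: "\<forall>i\<in>I. fst (p i) \<in> f ` H i \<and> snd (p i) \<in> K i \<and> h i = fst (p i) + snd (p i)"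
          by (rule bchoice[elim_format]) blast
        define a where "a = (\<Sum>i\<in>I. fst (p i))"
        define bs where "bs = (\<Sum>i\<in>I. snd (p i))"
        have "e = (\<Sum>i\<in>I. fst (p i) + snd (p i))" unfolding h(2) using p by (intro sum.cong) auto
        then have eab: "e = a + bs" unfolding a_def bs_def by (simp add: sum.distrib)
        have bso: "bs \<in> orth g (range f)" unfolding bs_def
          by (rule orth_sum) (use p Korth[OF R] in blast)
        have ar: "a \<in> range f" unfolding a_def
          by (rule subspace_sum[OF rng]) (use p in blast)
        have "g a e = 0" "g a bs = 0" using e bso ar unfolding orth_def by blast+
        then have "g a (e - bs) = 0" by (simp add: g_diff_right)
        moreover have "e - bs = a" using eab by simp
        ultimately have "a = 0" using g_self by simp
        then have ebs: "e = bs" using eab by simp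
        show "e \<in> sumset I K"
          unfolding sumset_def
        proof (intro CollectI exI conjI)
          show "e = sum (restrict (\<lambda>i. snd (p i)) I) I"
            unfolding ebs bs_def by (rule sum.cong) auto
          show "restrict (\<lambda>i. snd (p i)) I \<in> (\<Pi>\<^sub>E i\<in>I. K i)" using p by auto
        qed
      qed
    qed
  qed
  then show ?thesis unfolding I_def K_def .
qed

end
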